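(* Let $\beta>1$ be irrational and let $n,m\ge 2$ be integers with $n\neq m$. Then $\mu_{(\beta,n)}\neq\mu_{(\beta,m)}$.
   Context: For a real number $\gamma>1$ let $T_\gamma:[0,1)\to[0,1)$, $T_\gamma(x)=\gamma x \bmod 1$. For real $\beta>1$ and an integer $n\ge 2$, the alternate base transformation $K_{(\beta,n)}:\{0,1\}\times[0,1)\to\{0,1\}\times[0,1)$ is $K_{(\beta,n)}(0,x)=(1,T_\beta(x))$, $K_{(\beta,n)}(1,x)=(0,T_n(x))$. For reals $\gamma_1,\gamma_2>1$, $T_{\gamma_1\circ\gamma_2}:=T_{\gamma_1}\circ T_{\gamma_2}$ (a piecewise linear map of constant slope $\gamma_1\gamma_2$), and $\mu_{\gamma_1\circ\gamma_2}$ denotes its unique invariant probability measure absolutely continuous with respect to Lebesgue measure. The absolutely continuous invariant probability measure $\mu_{(\beta,n)}$ of $K_{(\beta,n)}$ is given by $\mu_{(\beta,n)}(\{0\}\times A\cup\{1\}\times B)=\tfrac12\mu_{n\circ\beta}(A)+\tfrac12\mu_{\beta\circ n}(B)$ for Borel $A,B\subseteq[0,1)$. *)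

theory Defs
  imports "HOL-Probability.Probability"
begin

definition Tmap :: "real \<Rightarrow> real \<Rightarrow> real" where
  "Tmap \<gamma> x = \<gamma> * x - of_int \<lfloor>\<gamma> * x\<rfloor>"

definition unit_borel :: "real measure" where
  "unit_borel = restrict_space borel {0..<1}"

definition unit_lebesgue :: "real measure" where
  "unit_lebesgue = restrict_space lborel {0..<1}"

definition is_acip :: "(real \<Rightarrow> real) \<Rightarrow> real measure \<Rightarrow> bool" where
  "is_acip f \<mu> \<longleftrightarrow>
     sets \<mu> = sets unit_borel \<and> space \<mu> = {0..<1} \<and>
     prob_space \<mu> \<and>
     absolutely_continuous unit_lebesgue \<mu> \<and>
     f \<in> measurable \<mu> \<mu> \<and> distr \<mu> \<mu> f = \<mu>"

definition mu_comp :: "real \<Rightarrow> real \<Rightarrow> real measure" where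
  "mu_comp \<gamma>1 \<gamma>2 = (THE \<mu>. is_acip (Tmap \<gamma>1 \<circ> Tmap \<gamma>2) \<mu>)"

text \<open>The acip mu_{(beta,n)} of the alternate base transformation K_{(beta,n)} on
  {0,1} x [0,1): mu(S) = 1/2 mu_{n o beta}(S_0) + 1/2 mu_{beta o n}(S_1),
  where S_i is the slice of S at i.\<close>
definition mu_alt :: "real \<Rightarrow> nat \<Rightarrow> (nat \<times> real) measure" where
  "mu_alt \<beta> n = measure_of ({0,1::nat} \<times> {0..<1})
      (sets (count_space {0,1::nat} \<Otimes>\<^sub>M unit_borel))
      (\<lambda>S. ennreal (1/2) * emeasure (mu_comp (real n) \<beta>) {x. (0, x) \<in> S}
          + ennreal (1/2) * emeasure (mu_comp \<beta> (real n)) {x. (1, x) \<in> S})"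

end

theory Submission
  imports Defs
begin

lemma Tmap_frac: "Tmap g x = frac (g * x)" by (simp add: Tmap_def frac_def)
lemma Tmap_range: "Tmap g x \<in> {0..<1}" by (simp add: Tmap_frac frac_lt_1)
lemma Tmap_comp: "Tmap (real n) (Tmap b x) = Tmap (real n * b) x"
proof -
  have e: "real n * Tmap b x = real n * b * x - of_int (int n * \<lfloor>b * x\<rfloor>)"
    by (simp add: Tmap_def algebra_simps)
  have fr: "frac (y - of_int k) = frac y" for y :: real and k :: int
    by (simp add: frac_def)
  have "frac (real n * b * x - of_int (int n * \<lfloor>b * x\<rfloor>)) = frac (real n * b * x)"
    by (rule fr)
  then show ?thesis using e by (simp add: Tmap_frac)
qed
lemma borel_Tmap[measurable]: "Tmap g \<in> borel_measurable borel"
  unfolding Tmap_def by measurable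
lemma affine_emeasure:
  assumes g: "g > 0" and B: "B \<in> sets borel"
  shows "emeasure lborel {x. g * x - i \<in> B} = ennreal (1/g) * emeasure lborel B"
proof -
  have m: "{x::real. g * x - i \<in> B} \<in> sets borel" using B by measurable
  have "emeasure lborel {x. g * x - i \<in> B} =
     emeasure (density (distr lborel borel (\<lambda>x. i/g + (1/g) * x)) (\<lambda>_. ennreal (abs (1/g)))) {x. g * x - i \<in> B}"
    using lborel_real_affine[of "1/g" "i/g"] g by simp
  also have "\<dots> = ennreal (1/g) * emeasure (distr lborel borel (\<lambda>x. i/g + (1/g) * x)) {x. g * x - i \<in> B}"
    using m g by (simp add: emeasure_density_const)
  also have "\<dots> = ennreal (1/g) * emeasure lborel ((\<lambda>x. i/g + (1/g) * x) -` {x. g * x - i \<in> B})"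
    using m by (subst emeasure_distr) auto
  also have "(\<lambda>x. i/g + (1/g) * x) -` {x. g * x - i \<in> B} = B" using g by (auto simp: field_simps)
  finally show ?thesis .
qed

lemma KL:
  assumes g: "g > 1" and S: "S \<in> sets borel" "S \<subseteq> {0..<1}" and t: "0 \<le> t" "t \<le> 1"
  shows "emeasure lborel {x\<in>{0..<t}. Tmap g x \<in> S} =
    ennreal (1/g) * (of_nat (nat \<lfloor>g*t\<rfloor>) * emeasure lborel S + emeasure lborel (S \<inter> {0..<Tmap g t}))"
proof -
  define N where "N = nat \<lfloor>g*t\<rfloor>"
  have N: "of_int \<lfloor>g*t\<rfloor> = real N" using g t by (simp add: N_def)
  define c where "c i = (if i < N then 1 else Tmap g t)" for i
  define Q where "Q i = {x. g * x - real i \<in> S \<inter> {0..<c i}}" for i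
  have Qm: "Q i \<in> sets borel" for i using S unfolding Q_def by measurable
  have eq: "{x\<in>{0..<t}. Tmap g x \<in> S} = (\<Union>i\<in>{..N}. Q i)"
  proof (intro set_eqI iffI)
    fix x assume x: "x \<in> {x\<in>{0..<t}. Tmap g x \<in> S}"
    define j where "j = nat \<lfloor>g*x\<rfloor>"
    have gx: "0 \<le> g * x" "g * x < g * t" using x g by auto
    have j: "of_int \<lfloor>g*x\<rfloor> = real j" using gx by (simp add: j_def)
    have jN: "j \<le> N" unfolding j_def N_def using gx by (simp add: floor_mono nat_mono)
    have T: "Tmap g x = g * x - real j" using j by (simp add: Tmap_def)
    have "x \<in> Q j"
    proof (cases "j < N")
      case True then show ?thesis using x T Tmap_range[of g x] by (auto simp: Q_def c_def)
    next
      case False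
      then have "j = N" using jN by simp
      then have "g * x - real j < Tmap g t" using gx N by (simp add: Tmap_def)
      then show ?thesis using x T False Tmap_range[of g x] by (auto simp: Q_def c_def)
    qed
    then show "x \<in> (\<Union>i\<in>{..N}. Q i)" using jN by auto
  next
    fix x assume "x \<in> (\<Union>i\<in>{..N}. Q i)"
    then obtain i where i: "i \<le> N" "g * x - real i \<in> S" "g * x - real i < c i" "0 \<le> g * x - real i"
      by (auto simp: Q_def)
    have "g * x - real i < 1" using i(2) S by auto
    then have fl: "\<lfloor>g*x\<rfloor> = int i" using i(4) by (simp add: floor_eq_iff)
    have T: "Tmap g x = g * x - real i" using fl by (simp add: Tmap_def)
    have x0: "0 \<le> x" using i(4) g by (smt (verit) mult_nonneg_nonneg of_nat_0_le_iff zero_le_mult_iff)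
    have "g * x < g * t"
    proof (cases "i < N")
      case True
      then have "real i + 1 \<le> real N" by simp
      also have "real N \<le> g * t" using N by (metis of_int_floor_le)
      finally show ?thesis using i \<open>g * x - real i < 1\<close> by linarith
    next
      case False
      then have "i = N" using i by simp
      then show ?thesis using i(3) False N by (simp add: c_def Tmap_def)
    qed
    then have "x < t" using g by simp
    then show "x \<in> {x\<in>{0..<t}. Tmap g x \<in> S}" using x0 T i by auto
  qed
  have disj: "disjoint_family_on Q {..N}"
  proof (auto simp: disjoint_family_on_def)
    fix i j x assume "i \<noteq> j" "x \<in> Q i" "x \<in> Q j"
    then have "\<lfloor>g*x\<rfloor> = int i" "\<lfloor>g*x\<rfloor> = int j" using S by (auto simp: Q_def floor_eq_iff)
    then show False using \<open>i \<noteq> j\<close> by simp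
  qed
  have mQ: "emeasure lborel (Q i) = ennreal (1/g) * emeasure lborel (S \<inter> {0..<c i})" for i
    unfolding Q_def using g S by (intro affine_emeasure) auto
  have "emeasure lborel {x\<in>{0..<t}. Tmap g x \<in> S} = (\<Sum>i\<in>{..N}. emeasure lborel (Q i))"
    unfolding eq using Qm disj by (intro sum_emeasure[symmetric]) auto
  also have "\<dots> = (\<Sum>i\<in>{..<N}. emeasure lborel (Q i)) + emeasure lborel (Q N)"
    by (simp add: lessThan_Suc_atMost[symmetric])
  also have "(\<Sum>i\<in>{..<N}. emeasure lborel (Q i)) = (\<Sum>i\<in>{..<N}. ennreal (1/g) * emeasure lborel S)"
    using S by (intro sum.cong) (auto simp: mQ c_def Int_absorb2)
  also have "emeasure lborel (Q N) = ennreal (1/g) * emeasure lborel (S \<inter> {0..<Tmap g t})"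
    by (simp add: mQ c_def)
  finally show ?thesis by (simp add: N_def distrib_left mult.left_commute)
qed

lemma sets_unit_borel: "S \<in> sets unit_borel \<longleftrightarrow> S \<in> sets borel \<and> S \<subseteq> {0..<1}"
  unfolding unit_borel_def by (subst sets_restrict_space_iff) auto
lemma sets_unit_lebesgue: "sets unit_lebesgue = sets unit_borel"
  unfolding unit_lebesgue_def unit_borel_def by (simp add: sets_restrict_space)
lemma space_unit_borel[simp]: "space unit_borel = {0..<1}"
  unfolding unit_borel_def by (simp add: space_restrict_space)
lemma space_unit_lebesgue[simp]: "space unit_lebesgue = {0..<1}"
  unfolding unit_lebesgue_def by (simp add: space_restrict_space)
lemma emeasure_unit_lebesgue: "S \<in> sets unit_borel \<Longrightarrow> emeasure unit_lebesgue S = emeasure lborel S"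
  unfolding unit_lebesgue_def sets_unit_borel by (subst emeasure_restrict_space) auto

lemma lb_fin:
  fixes S :: "real set"
  assumes "S \<in> sets borel" "S \<subseteq> {0..<1}"
  shows "emeasure lborel S = ennreal (measure lborel S)" "measure lborel S \<le> 1" "0 \<le> measure lborel S"
proof -
  have le: "emeasure lborel S \<le> 1" using emeasure_mono[of S "{0..<1::real}" lborel] assms by simp
  then show "emeasure lborel S = ennreal (measure lborel S)"
    by (intro emeasure_eq_ennreal_measure) (auto simp: top_unique)
  then show "measure lborel S \<le> 1" using le by (simp add: ennreal_le_1)
qed simp

definition tk :: "real \<Rightarrow> nat \<Rightarrow> real" where "tk g k = (Tmap g ^^ k) 1"
lemma tk_0[simp]: "tk g 0 = 1" by (simp add: tk_def)
lemma tk_Suc: "tk g (Suc k) = Tmap g (tk g k)" by (simp add: tk_def)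
lemma tk_range': "0 \<le> tk g k \<and> tk g k \<le> 1"
proof (cases k)
  case (Suc j) then show ?thesis using Tmap_range[of g "tk g j"] by (auto simp: tk_Suc)
qed auto
lemma tk_range: "0 \<le> tk g k" "tk g k \<le> 1" using tk_range' by auto
lemma tk_Suc_lt: "tk g (Suc k) < 1" using Tmap_range by (simp add: tk_Suc)

definition Zc :: "real \<Rightarrow> real" where "Zc g = (\<Sum>k. tk g k / g^k)"
definition pw :: "real \<Rightarrow> real set \<Rightarrow> real" where
  "pw g S = (\<Sum>k. measure lborel (S \<inter> {0..<tk g k}) / g^k)"
definition parry :: "real \<Rightarrow> real measure" where
  "parry g = density unit_lebesgue
     (\<lambda>x. ennreal (1 / Zc g) * (\<Sum>k. ennreal (indicator {0..<tk g k} x / g^k)))"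

lemma summable_bounded:
  fixes g :: real assumes g: "g > 1" and f: "\<And>k. 0 \<le> f k" "\<And>k. f k \<le> 1"
  shows "summable (\<lambda>k. f k / g^k)"
proof (rule summable_comparison_test'[of "\<lambda>k. (1/g)^k" 0])
  show "summable (\<lambda>k. (1/g)^k)" using g by (intro summable_geometric) auto
  show "norm (f k / g ^ k) \<le> (1 / g) ^ k" for k
    using f[of k] g by (simp add: power_divide divide_right_mono)
qed

lemma Zc_summable: "g > 1 \<Longrightarrow> summable (\<lambda>k. tk g k / g^k)"
  by (rule summable_bounded) (auto simp: tk_range)
lemma Zc_ge1: assumes "g > 1" shows "Zc g \<ge> 1"
proof -
  have "tk g 0 / g^0 \<le> Zc g" unfolding Zc_def using Zc_summable[OF assms] assms
    by (intro sum_le_suminf[of _ "{0}", simplified]) (auto simp: tk_range)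
  then show ?thesis by simp
qed

lemma pw_summable: "g > 1 \<Longrightarrow> S \<subseteq> {0..<1} \<Longrightarrow> S \<in> sets borel \<Longrightarrow>
   summable (\<lambda>k. measure lborel (S \<inter> {0..<tk g k}) / g^k)"
  by (rule summable_bounded) (auto intro!: lb_fin)

lemma parry_dens_meas:
  "(\<lambda>x. ennreal (1 / Zc g) * (\<Sum>k. ennreal (indicator {0..<tk g k} x / g^k))) \<in> borel_measurable unit_lebesgue"
proof -
  have "(\<lambda>x. ennreal (1 / Zc g) * (\<Sum>k. ennreal (indicator {0..<tk g k} x / g^k))) \<in> borel_measurable borel"
    by measurable
  then show ?thesis unfolding unit_lebesgue_def by (intro measurable_restrict_space1) simp
qed

lemma parry_emeasure:
  assumes g: "g > 1" and S: "S \<in> sets unit_borel"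
  shows "emeasure (parry g) S = ennreal (pw g S / Zc g)"
proof -
  have Sb: "S \<in> sets borel" "S \<subseteq> {0..<1}" using S sets_unit_borel by auto
  have Sl: "S \<in> sets unit_lebesgue" using S sets_unit_lebesgue by simp
  have "emeasure (parry g) S = (\<integral>\<^sup>+x. ennreal (1 / Zc g) * (\<Sum>k. ennreal (indicator {0..<tk g k} x / g^k)) * indicator S x \<partial>unit_lebesgue)"
    unfolding parry_def using Sl parry_dens_meas by (subst emeasure_density) auto
  also have "\<dots> = (\<integral>\<^sup>+x. ennreal (1 / Zc g) * (\<Sum>k. ennreal (indicator {0..<tk g k} x / g^k)) * indicator S x * indicator {0..<1} x \<partial>lborel)"
    unfolding unit_lebesgue_def by (subst nn_integral_restrict_space) auto
  also have "\<dots> = (\<integral>\<^sup>+x. ennreal (1 / Zc g) * (\<Sum>k. ennreal (1/g^k) * indicator (S \<inter> {0..<tk g k}) x) \<partial>lborel)"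
  proof (intro nn_integral_cong)
    fix x show "ennreal (1 / Zc g) * (\<Sum>k. ennreal (indicator {0..<tk g k} x / g^k)) * indicator S x * indicator {0..<1} x =
      ennreal (1 / Zc g) * (\<Sum>k. ennreal (1/g^k) * indicator (S \<inter> {0..<tk g k}) x)"
    proof (cases "x \<in> S")
      case True
      have "(\<Sum>k. ennreal (indicator {0..<tk g k} x / g^k)) = (\<Sum>k. ennreal (1/g^k) * indicator (S \<inter> {0..<tk g k}) x)"
        using True Sb by (intro suminf_cong) (auto simp: indicator_def)
      then show ?thesis using True Sb by auto
    qed auto
  qed
  also have "\<dots> = ennreal (1 / Zc g) * (\<Sum>k. ennreal (1/g^k) * emeasure lborel (S \<inter> {0..<tk g k}))"
    using Sb by (simp add: nn_integral_cmult nn_integral_suminf)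
  also have "(\<Sum>k. ennreal (1/g^k) * emeasure lborel (S \<inter> {0..<tk g k})) =
      (\<Sum>k. ennreal (measure lborel (S \<inter> {0..<tk g k}) / g^k))"
  proof (intro suminf_cong)
    fix k
    have "emeasure lborel (S \<inter> {0..<tk g k}) = ennreal (measure lborel (S \<inter> {0..<tk g k}))"
      using Sb by (intro lb_fin) auto
    then show "ennreal (1/g^k) * emeasure lborel (S \<inter> {0..<tk g k}) = ennreal (measure lborel (S \<inter> {0..<tk g k}) / g^k)"
      using g by (simp add: ennreal_mult'[symmetric])
  qed
  also have "\<dots> = ennreal (pw g S)"
    unfolding pw_def using Sb g by (intro suminf_ennreal2 pw_summable) (auto intro!: lb_fin)
  finally show ?thesis using Zc_ge1[OF g] by (simp add: ennreal_mult'[symmetric])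
qed

lemma KL_real:
  assumes g: "g > 1" and S: "S \<in> sets borel" "S \<subseteq> {0..<1}" and t: "0 \<le> t" "t \<le> 1"
  shows "measure lborel {x\<in>{0..<t}. Tmap g x \<in> S} =
    (real (nat \<lfloor>g*t\<rfloor>) * measure lborel S + measure lborel (S \<inter> {0..<Tmap g t})) / g"
proof -
  have m: "{x\<in>{0..<t}. Tmap g x \<in> S} \<in> sets borel" using S by measurable
  have sub: "{x\<in>{0..<t}. Tmap g x \<in> S} \<subseteq> {0..<1}" using t by auto
  have "ennreal (measure lborel {x\<in>{0..<t}. Tmap g x \<in> S}) =
     ennreal (1/g) * (of_nat (nat \<lfloor>g*t\<rfloor>) * ennreal (measure lborel S) + ennreal (measure lborel (S \<inter> {0..<Tmap g t})))"
  proof -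
    have "emeasure lborel (S \<inter> {0..<Tmap g t}) = ennreal (measure lborel (S \<inter> {0..<Tmap g t}))"
      using S by (intro lb_fin) auto
    then show ?thesis using KL[OF g S t] lb_fin(1)[OF m sub] lb_fin(1)[OF S] by (simp only:)
  qed
  also have "\<dots> = ennreal ((real (nat \<lfloor>g*t\<rfloor>) * measure lborel S + measure lborel (S \<inter> {0..<Tmap g t})) / g)"
  proof -
    have n: "0 \<le> measure lborel S" "0 \<le> measure lborel (S \<inter> {0..<Tmap g t})" by auto
    have "of_nat (nat \<lfloor>g*t\<rfloor>) * ennreal (measure lborel S) = ennreal (real (nat \<lfloor>g*t\<rfloor>) * measure lborel S)"
      by (simp add: ennreal_of_nat_eq_real_of_nat ennreal_mult')
    then have "of_nat (nat \<lfloor>g*t\<rfloor>) * ennreal (measure lborel S) + ennreal (measure lborel (S \<inter> {0..<Tmap g t}))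
       = ennreal (real (nat \<lfloor>g*t\<rfloor>) * measure lborel S + measure lborel (S \<inter> {0..<Tmap g t}))"
      using n by (simp add: ennreal_plus)
    moreover have "ennreal (1/g) * ennreal (real (nat \<lfloor>g*t\<rfloor>) * measure lborel S + measure lborel (S \<inter> {0..<Tmap g t}))
      = ennreal ((real (nat \<lfloor>g*t\<rfloor>) * measure lborel S + measure lborel (S \<inter> {0..<Tmap g t})) / g)"
      using g n by (subst ennreal_mult''[symmetric]) auto
    ultimately show ?thesis by simp
  qed
  finally have "ennreal (measure lborel {x\<in>{0..<t}. Tmap g x \<in> S}) = ennreal ((real (nat \<lfloor>g*t\<rfloor>) * measure lborel S + measure lborel (S \<inter> {0..<Tmap g t})) / g)" .
  then show ?thesis using g by (subst (asm) ennreal_inj) auto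
qed

lemma nat_floor_tk: assumes g: "g > 1"
  shows "real (nat \<lfloor>g * tk g k\<rfloor>) = g * tk g k - tk g (Suc k)"
  using tk_range[of g k] g by (simp add: tk_Suc Tmap_def)

lemma pw_invariant:
  assumes g: "g > 1" and S: "S \<in> sets borel" "S \<subseteq> {0..<1}"
  shows "pw g (Tmap g -` S \<inter> {0..<1}) = pw g S"
proof -
  define a where "a k = measure lborel (S \<inter> {0..<tk g k}) / g^k" for k
  define f where "f k = tk g k / g^k" for k
  define m where "m = measure lborel S"
  have set_eq: "(Tmap g -` S \<inter> {0..<1}) \<inter> {0..<tk g k} = {x\<in>{0..<tk g k}. Tmap g x \<in> S}" for k
    using tk_range[of g k] by auto
  have e: "measure lborel ((Tmap g -` S \<inter> {0..<1}) \<inter> {0..<tk g k}) / g^k = m * (f k - f (Suc k)) + a (Suc k)" for k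
  proof -
    have "measure lborel ((Tmap g -` S \<inter> {0..<1}) \<inter> {0..<tk g k}) =
      ((g * tk g k - tk g (Suc k)) * m + measure lborel (S \<inter> {0..<tk g (Suc k)})) / g"
      unfolding set_eq using KL_real[OF g S tk_range[of g k]] nat_floor_tk[OF g, of k]
      by (simp add: tk_Suc m_def)
    then show ?thesis using g unfolding a_def f_def by (simp add: field_simps)
  qed
  have f0: "f \<longlonglongrightarrow> 0" unfolding f_def using summable_LIMSEQ_zero[OF Zc_summable[OF g]] .
  have s1: "(\<lambda>k. m * (f k - f (Suc k))) sums (m * (f 0 - 0))"
    by (intro sums_mult telescope_sums' f0)
  have sa: "summable a" unfolding a_def using pw_summable[OF g S(2) S(1)] .
  have s2: "(\<lambda>k. a (Suc k)) sums (suminf a - a 0)"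
    using sa by (simp add: sums_iff summable_Suc_iff suminf_split_head)
  have "(\<lambda>k. measure lborel ((Tmap g -` S \<inter> {0..<1}) \<inter> {0..<tk g k}) / g^k) sums (m * (f 0 - 0) + (suminf a - a 0))"
    unfolding e by (intro sums_add s1 s2)
  moreover have "f 0 = 1" "a 0 = m" using S by (auto simp: f_def a_def m_def Int_absorb2)
  ultimately have "(\<lambda>k. measure lborel ((Tmap g -` S \<inter> {0..<1}) \<inter> {0..<tk g k}) / g^k) sums suminf a" by simp
  then show ?thesis unfolding pw_def a_def by (simp add: sums_iff)
qed

lemma pw_unit: assumes g: "g > 1" shows "pw g {0..<1} = Zc g"
  unfolding pw_def Zc_def using tk_range[of g]
  by (intro suminf_cong) (auto simp: Int_absorb1)

lemma Tmap_meas_ub: "Tmap g \<in> measurable unit_borel unit_borel"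
  unfolding unit_borel_def using Tmap_range by (intro measurable_restrict_space3) auto

lemma sets_parry: "sets (parry g) = sets unit_borel"
  unfolding parry_def by (simp add: sets_unit_lebesgue)
lemma space_parry[simp]: "space (parry g) = {0..<1}"
  using sets_eq_imp_space_eq[OF sets_parry] by simp

lemma preimage_ub: "A \<in> sets unit_borel \<Longrightarrow> Tmap g -` A \<inter> {0..<1} \<in> sets unit_borel"
  using Tmap_meas_ub[of g] by (metis measurable_sets space_unit_borel)

lemma parry_acip:
  assumes g: "g > 1"
  shows "is_acip (Tmap g) (parry g)"
  unfolding is_acip_def
proof (intro conjI)
  show "sets (parry g) = sets unit_borel" by (rule sets_parry)
  show "space (parry g) = {0..<1}" by simp
  show "prob_space (parry g)"
  proof
    have "{0..<1::real} \<in> sets unit_borel" by (simp add: sets_unit_borel)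
    then show "emeasure (parry g) (space (parry g)) = 1"
      using Zc_ge1[OF g] by (simp add: parry_emeasure[OF g] pw_unit[OF g])
  qed
  show "absolutely_continuous unit_lebesgue (parry g)"
    unfolding parry_def by (intro absolutely_continuousI_density parry_dens_meas)
  show M: "Tmap g \<in> measurable (parry g) (parry g)"
    using Tmap_meas_ub by (simp add: measurable_cong_sets[OF sets_parry sets_parry])
  show "distr (parry g) (parry g) (Tmap g) = parry g"
  proof (rule measure_eqI)
    show "sets (distr (parry g) (parry g) (Tmap g)) = sets (parry g)" by simp
    fix A assume "A \<in> sets (distr (parry g) (parry g) (Tmap g))"
    then have A: "A \<in> sets unit_borel" by (simp add: sets_parry)
    then have A': "A \<in> sets borel" "A \<subseteq> {0..<1}" by (auto simp: sets_unit_borel)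
    have "emeasure (distr (parry g) (parry g) (Tmap g)) A = emeasure (parry g) (Tmap g -` A \<inter> {0..<1})"
      using M A by (subst emeasure_distr) (auto simp: sets_parry)
    also have "\<dots> = ennreal (pw g (Tmap g -` A \<inter> {0..<1}) / Zc g)"
      using preimage_ub[OF A] by (simp add: parry_emeasure[OF g])
    also have "\<dots> = emeasure (parry g) A"
      using A by (simp add: parry_emeasure[OF g] pw_invariant[OF g A'])
    finally show "emeasure (distr (parry g) (parry g) (Tmap g)) A = emeasure (parry g) A" .
  qed
qed

lemma measure_eqI_lessThan':
  fixes M N :: "real measure"
  assumes sets: "sets M = sets borel" "sets N = sets borel"
  assumes fin: "\<And>x. emeasure M {..<x} < \<infinity>"
  assumes "\<And>x. emeasure M {..<x} = emeasure N {..<x}"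
  shows "M = N"
proof (rule measure_eqI_generator_eq_countable)
  let ?LT = "\<lambda>a::real. {..<a}" let ?E = "range ?LT"
  show "Int_stable ?E"
  proof (auto simp: Int_stable_def)
    fix a b :: real
    have "{..<a} \<inter> {..<b} = {..<min a b}" by auto
    then show "{..<a} \<inter> {..<b} \<in> range lessThan" by simp
  qed
  show "?E \<subseteq> Pow UNIV" "sets M = sigma_sets UNIV ?E" "sets N = sigma_sets UNIV ?E"
    unfolding sets borel_Iio by auto
  show "?LT`Rats \<subseteq> ?E" "\<And>a. a \<in> ?LT`Rats \<Longrightarrow> emeasure M a \<noteq> \<infinity>"
    using fin by (auto simp: less_top)
  show "(\<Union>i\<in>Rats. ?LT i) = UNIV"
  proof (auto)
    fix x :: real
    obtain q where "q \<in> \<rat>" "x < q" "q < x + 1" using Rats_dense_in_real[of x "x+1"] by auto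
    then show "\<exists>q\<in>\<rat>. x < q" by auto
  qed
qed (auto intro: assms countable_rat)

lemma null_diff_measure_eq:
  fixes X Y :: "real set"
  assumes "X \<in> sets borel" "Y \<in> sets borel" "X \<subseteq> {0..<1}" "Y \<subseteq> {0..<1}"
    "emeasure lborel (X - Y) = 0" "emeasure lborel (Y - X) = 0"
  shows "measure lborel X = measure lborel Y"
proof -
  have "emeasure lborel X = emeasure lborel (X \<union> (Y - X))"
    using assms by (intro emeasure_Un_null_set[symmetric]) (auto simp: null_sets_def)
  also have "X \<union> (Y - X) = Y \<union> (X - Y)" by auto
  also have "emeasure lborel (Y \<union> (X - Y)) = emeasure lborel Y"
    using assms by (intro emeasure_Un_null_set) (auto simp: null_sets_def)
  finally have "emeasure lborel X = emeasure lborel Y" .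
  then show ?thesis by (simp add: measure_def)
qed

lemma ergodic_lemma:
  assumes g: "g > 1" and A: "A \<in> sets borel" "A \<subseteq> {0..<1}"
    and n1: "emeasure lborel (A - (Tmap g -` A \<inter> {0..<1})) = 0"
    and n2: "emeasure lborel ((Tmap g -` A \<inter> {0..<1}) - A) = 0"
  shows "measure lborel A = 0 \<or> measure lborel A = 1"
proof -
  define m where "m = measure lborel A"
  define \<phi> where "\<phi> s = measure lborel (A \<inter> {0..<s}) - m * s" for s
  have m01: "0 \<le> m" "m \<le> 1" using lb_fin[OF A] by (auto simp: m_def)
  have rec: "\<phi> s = \<phi> (Tmap g s) / g" if s: "0 \<le> s" "s \<le> 1" for s
  proof -
    have Bm: "Tmap g -` A \<in> sets borel" using measurable_sets[OF borel_Tmap A(1)] by simp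
    have P: "{x\<in>{0..<s}. Tmap g x \<in> A} = (Tmap g -` A) \<inter> {0..<s}" by auto
    have "measure lborel (A \<inter> {0..<s}) = measure lborel {x\<in>{0..<s}. Tmap g x \<in> A}"
      unfolding P
    proof (rule null_diff_measure_eq)
      have s1: "A \<inter> {0..<s} - Tmap g -` A \<inter> {0..<s} \<subseteq> A - (Tmap g -` A \<inter> {0..<1})" using s by auto
      have s2: "A - (Tmap g -` A \<inter> {0..<1}) \<in> sets lborel" using A Bm by auto
      show "emeasure lborel (A \<inter> {0..<s} - Tmap g -` A \<inter> {0..<s}) = 0"
        by (rule emeasure_eq_0[OF s2 n1 s1])
      have s3: "Tmap g -` A \<inter> {0..<s} - A \<inter> {0..<s} \<subseteq> (Tmap g -` A \<inter> {0..<1}) - A" using s by auto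
      have s4: "(Tmap g -` A \<inter> {0..<1}) - A \<in> sets lborel" using A Bm by auto
      show "emeasure lborel (Tmap g -` A \<inter> {0..<s} - A \<inter> {0..<s}) = 0"
        by (rule emeasure_eq_0[OF s4 n2 s3])
      show "A \<inter> {0..<s} \<in> sets borel" "Tmap g -` A \<inter> {0..<s} \<in> sets borel" using A Bm by auto
      show "A \<inter> {0..<s} \<subseteq> {0..<1}" "Tmap g -` A \<inter> {0..<s} \<subseteq> {0..<1}" using s by auto
    qed
    also have "\<dots> = (real (nat \<lfloor>g * s\<rfloor>) * m + measure lborel (A \<inter> {0..<Tmap g s})) / g"
      unfolding m_def by (rule KL_real[OF g A s])
    also have "real (nat \<lfloor>g * s\<rfloor>) = g * s - Tmap g s" using s g by (simp add: Tmap_def)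
    finally show ?thesis unfolding \<phi>_def using g by (simp add: field_simps)
  qed
  have bnd: "\<bar>\<phi> s\<bar> \<le> 1" if "0 \<le> s" "s \<le> 1" for s
  proof -
    have "measure lborel (A \<inter> {0..<s}) \<le> 1" "0 \<le> m * s" "m * s \<le> 1"
      using that m01 A by (auto intro!: lb_fin mult_le_one)
    moreover have "0 \<le> measure lborel (A \<inter> {0..<s})" by (rule measure_nonneg)
    ultimately show ?thesis unfolding \<phi>_def abs_le_iff by linarith
  qed
  have ind: "\<bar>\<phi> s\<bar> \<le> (1/g)^k" if "0 \<le> s" "s \<le> 1" for k s
    using that
  proof (induction k arbitrary: s)
    case 0 then show ?case using bnd by simp
  next
    case (Suc k)
    have "\<bar>\<phi> (Tmap g s)\<bar> \<le> (1/g)^k" using Suc.IH Tmap_range[of g s] by auto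
    then have "\<bar>\<phi> (Tmap g s)\<bar> / g \<le> (1/g)^k / g" using g by (simp add: divide_right_mono)
    then show ?case using rec[OF Suc.prems] g by (simp add: abs_divide power_divide mult.commute)
  qed
  have zero: "\<phi> s = 0" if "0 \<le> s" "s \<le> 1" for s
  proof (rule ccontr)
    assume "\<phi> s \<noteq> 0"
    then obtain k where "(1/g)^k < \<bar>\<phi> s\<bar>" using real_arch_pow_inv[of "\<bar>\<phi> s\<bar>" "1/g"] g by auto
    then show False using ind[OF that, of k] by simp
  qed
  define N1 where "N1 = density (lborel::real measure) (indicator A)"
  define N2 where "N2 = density lborel (\<lambda>x::real. ennreal m * indicator {0..<1} x)"
  have e1: "emeasure N1 S = emeasure lborel (A \<inter> S)" if "S \<in> sets borel" for S
    unfolding N1_def using that A by (simp add: emeasure_density nn_integral_indicator Int_commute indicator_inter_arith[symmetric])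
  have e2: "emeasure N2 S = ennreal m * emeasure lborel ({0..<1} \<inter> S)" if "S \<in> sets borel" for S
  proof -
    have "emeasure N2 S = (\<integral>\<^sup>+x. ennreal m * indicator {0..<1} x * indicator S x \<partial>lborel)"
    proof -
      have "(\<lambda>x. ennreal m * indicator {0..<1::real} x) \<in> borel_measurable lborel"
        by (rule borel_measurable_times_ennreal) simp_all
      note mm = this
      show ?thesis unfolding N2_def by (rule emeasure_density[OF mm]) (use that in simp)
    qed
    also have "\<dots> = (\<integral>\<^sup>+x. ennreal m * indicator ({0..<1} \<inter> S) x \<partial>lborel)"
      by (intro nn_integral_cong) (auto simp: indicator_def)
    also have "\<dots> = ennreal m * emeasure lborel ({0..<1} \<inter> S)"
      using that by (simp add: nn_integral_cmult)
    finally show ?thesis .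
  qed
  have "N1 = N2"
  proof (rule measure_eqI_lessThan')
    show "sets N1 = sets borel" "sets N2 = sets borel" by (auto simp: N1_def N2_def)
    fix x :: real
    have "emeasure lborel (A \<inter> {..<x}) \<le> emeasure lborel {0..<1::real}"
      using A by (intro emeasure_mono) auto
    then show "emeasure N1 {..<x} < \<infinity>"
      by (simp add: e1) (metis ennreal_one_less_top order.strict_trans1)
    show "emeasure N1 {..<x} = emeasure N2 {..<x}"
    proof (cases "x \<le> 0")
      case True
      then have "A \<inter> {..<x} = {}" "{0..<1} \<inter> {..<x} = {}" using A by auto
      then show ?thesis by (simp add: e1 e2)
    next
      case False
      show ?thesis
      proof (cases "x \<ge> 1")
        case True
        then have "A \<inter> {..<x} = A" "{0..<1} \<inter> {..<x} = {0..<1}" using A by auto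
        then show ?thesis using lb_fin(1)[OF A] by (simp add: e1 e2 m_def)
      next
        case F2: False
        then have "A \<inter> {..<x} = A \<inter> {0..<x}" "{0..<1} \<inter> {..<x} = {0..<x}" using A False by auto
        moreover have "measure lborel (A \<inter> {0..<x}) = m * x" using zero[of x] False F2 by (simp add: \<phi>_def)
        moreover have "emeasure lborel (A \<inter> {0..<x}) = ennreal (measure lborel (A \<inter> {0..<x}))"
          using A by (intro lb_fin) auto
        ultimately show ?thesis using False m01 by (simp add: e1 e2 ennreal_mult)
      qed
    qed
  qed
  then have "emeasure N1 A = emeasure N2 A" by simp
  then have "ennreal m = ennreal m * ennreal m"
  proof -
    have "{0..<1} \<inter> A = A" "A \<inter> A = A" using A by auto
    then show ?thesis using \<open>emeasure N1 A = emeasure N2 A\<close> A lb_fin(1)[OF A] by (simp add: e1 e2 m_def)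
  qed
  then have "m = m * m" using m01 by (simp add: ennreal_mult'[symmetric])
  then show ?thesis unfolding m_def[symmetric] by (metis mult_cancel_right1 mult_eq_0_iff)
qed

lemma finite_UL: "finite_measure unit_lebesgue"
proof (rule finite_measureI)
  have "{0..<1::real} \<in> sets unit_borel" by (simp add: sets_unit_borel)
  then show "emeasure unit_lebesgue (space unit_lebesgue) \<noteq> \<infinity>"
    by (simp add: emeasure_unit_lebesgue)
qed

lemma pw_nonneg_terms:
  assumes g: "g > 1" and S: "S \<in> sets borel" "S \<subseteq> {0..<1}"
  shows "measure lborel S \<le> pw g S" "0 \<le> pw g S"
proof -
  have sm: "summable (\<lambda>k. measure lborel (S \<inter> {0..<tk g k}) / g^k)" by (rule pw_summable[OF g S(2) S(1)])
  have "(\<Sum>k\<in>{0}. measure lborel (S \<inter> {0..<tk g k}) / g^k) \<le> pw g S"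
    unfolding pw_def using sm g by (intro sum_le_suminf) auto
  then show "measure lborel S \<le> pw g S" using S by (simp add: Int_absorb2)
  show "0 \<le> pw g S" unfolding pw_def using sm g by (intro suminf_nonneg) auto
qed

lemma pw_null:
  assumes g: "g > 1" and S: "S \<in> sets borel" "S \<subseteq> {0..<1}" and n: "measure lborel S = 0"
  shows "pw g S = 0"
proof -
  have "measure lborel (S \<inter> {0..<tk g k}) = 0" for k
  proof -
    have "measure lborel (S \<inter> {0..<tk g k}) \<le> measure lborel S"
      using S lb_fin(1)[OF S] by (intro measure_mono_fmeasurable) (auto simp: fmeasurable_def)
    then show ?thesis using measure_nonneg[of lborel "S \<inter> {0..<tk g k}"] n by linarith
  qed
  then show ?thesis unfolding pw_def by simp
qed

lemma parry_null_iff: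
  assumes g: "g > 1" and S: "S \<in> sets unit_borel"
  shows "emeasure (parry g) S = 0 \<longleftrightarrow> emeasure lborel S = 0"
proof -
  have S': "S \<in> sets borel" "S \<subseteq> {0..<1}" using S by (auto simp: sets_unit_borel)
  have Z: "Zc g > 0" using Zc_ge1[OF g] by simp
  have "emeasure (parry g) S = 0 \<longleftrightarrow> pw g S = 0"
    using parry_emeasure[OF g S] Z pw_nonneg_terms[OF g S'] by simp
  also have "\<dots> \<longleftrightarrow> measure lborel S = 0"
    using pw_null[OF g S'] pw_nonneg_terms[OF g S'] measure_nonneg[of lborel S]
    by (metis order_antisym)
  also have "\<dots> \<longleftrightarrow> emeasure lborel S = 0"
    using lb_fin(1)[OF S'] by simp
  finally show ?thesis .
qed

lemma acip_unique:
  assumes g: "g > 1" and ac: "is_acip (Tmap g) \<mu>"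
  shows "\<mu> = parry g"
proof -
  have sets_mu: "sets \<mu> = sets unit_borel" and space_mu: "space \<mu> = {0..<1}" and "prob_space \<mu>"
    and abs: "absolutely_continuous unit_lebesgue \<mu>" and Tm: "Tmap g \<in> measurable \<mu> \<mu>"
    and inv: "distr \<mu> \<mu> (Tmap g) = \<mu>"
    using ac unfolding is_acip_def by auto
  interpret M: prob_space \<mu> by fact
  interpret P: prob_space "parry g" using parry_acip[OF g] unfolding is_acip_def by auto
  interpret UL: finite_measure unit_lebesgue by (rule finite_UL)
  have Pinv: "distr (parry g) (parry g) (Tmap g) = parry g" and PTm: "Tmap g \<in> measurable (parry g) (parry g)"
    using parry_acip[OF g] unfolding is_acip_def by auto
  define G where "G = RN_deriv unit_lebesgue \<mu>"
  define H where "H = (\<lambda>x. ennreal (1 / Zc g) * (\<Sum>k. ennreal (indicator {0..<tk g k} x / g^k)))"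
  have Gm: "G \<in> borel_measurable unit_lebesgue" by (simp add: G_def)
  have Hm: "H \<in> borel_measurable unit_lebesgue" using parry_dens_meas by (simp add: H_def)
  have muD: "density unit_lebesgue G = \<mu>" unfolding G_def
    using UL.density_RN_deriv[OF abs] sets_mu sets_unit_lebesgue by simp
  have paD: "density unit_lebesgue H = parry g" by (simp add: parry_def H_def)
  have emu: "emeasure \<mu> S = (\<integral>\<^sup>+x. G x * indicator S x \<partial>unit_lebesgue)" if "S \<in> sets unit_borel" for S
    using that sets_unit_lebesgue by (subst muD[symmetric], subst emeasure_density[OF Gm]) auto
  have epa: "emeasure (parry g) S = (\<integral>\<^sup>+x. H x * indicator S x \<partial>unit_lebesgue)" if "S \<in> sets unit_borel" for S
    using that sets_unit_lebesgue by (subst paD[symmetric], subst emeasure_density[OF Hm]) auto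
  define A where "A = {x \<in> space unit_lebesgue. H x < G x}"
  have "A \<in> sets unit_lebesgue" unfolding A_def using Gm Hm by measurable
  then have Am: "A \<in> sets unit_borel" by (simp add: sets_unit_lebesgue)
  have le: "emeasure \<mu> S \<le> emeasure (parry g) S" if S: "S \<in> sets unit_borel" "S \<inter> A = {}" for S
  proof -
    have "(\<integral>\<^sup>+x. G x * indicator S x \<partial>unit_lebesgue) \<le> (\<integral>\<^sup>+x. H x * indicator S x \<partial>unit_lebesgue)"
    proof (intro nn_integral_mono)
      fix x assume "x \<in> space unit_lebesgue"
      then show "G x * indicator S x \<le> H x * indicator S x"
        using S by (cases "x \<in> S") (auto simp: A_def not_less)
    qed
    then show ?thesis using emu[OF S(1)] epa[OF S(1)] by simp
  qed
  have strict: "emeasure (parry g) S < emeasure \<mu> S"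
    if S: "S \<in> sets unit_borel" "S \<subseteq> A" "emeasure lborel S \<noteq> 0" for S
  proof -
    have SU: "S \<in> sets unit_lebesgue" using S sets_unit_lebesgue by simp
    have "(\<integral>\<^sup>+x. H x * indicator S x \<partial>unit_lebesgue) < (\<integral>\<^sup>+x. G x * indicator S x \<partial>unit_lebesgue)"
    proof (rule nn_integral_less)
      show "(\<lambda>x. H x * indicator S x) \<in> borel_measurable unit_lebesgue" using Hm SU by measurable
      show "(\<lambda>x. G x * indicator S x) \<in> borel_measurable unit_lebesgue" using Gm SU by measurable
      show "(\<integral>\<^sup>+x. H x * indicator S x \<partial>unit_lebesgue) \<noteq> \<infinity>"
        using epa[OF S(1)] P.emeasure_finite[of S] by simp
      show "AE x in unit_lebesgue. H x * indicator S x \<le> G x * indicator S x"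
        using S by (intro AE_I2) (auto simp: A_def indicator_def less_imp_le)
      show "\<not> (AE x in unit_lebesgue. G x * indicator S x \<le> H x * indicator S x)"
      proof
        assume "AE x in unit_lebesgue. G x * indicator S x \<le> H x * indicator S x"
        then have "AE x in unit_lebesgue. x \<notin> S"
          by eventually_elim (use S in \<open>auto simp: A_def indicator_def not_le\<close>)
        then have "emeasure unit_lebesgue S = 0"
        proof -
          have "{x \<in> space unit_lebesgue. \<not> (x \<notin> S)} = S" using sets.sets_into_space[OF SU] by blast
          from AE_iff_measurable[OF SU this] show ?thesis using \<open>AE x in unit_lebesgue. x \<notin> S\<close> by simp
        qed
        then show False using S emeasure_unit_lebesgue by simp
      qed
    qed
    then show ?thesis using emu[OF S(1)] epa[OF S(1)] by simp
  qed
  define B where "B = Tmap g -` A \<inter> {0..<1}"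
  have Bm: "B \<in> sets unit_borel" unfolding B_def by (rule preimage_ub[OF Am])
  have muAB: "emeasure \<mu> B = emeasure \<mu> A"
  proof -
    have "emeasure (distr \<mu> \<mu> (Tmap g)) A = emeasure \<mu> B"
      using Tm Am sets_mu space_mu unfolding B_def by (subst emeasure_distr) auto
    then show ?thesis using inv by simp
  qed
  have paAB: "emeasure (parry g) B = emeasure (parry g) A"
  proof -
    have "emeasure (distr (parry g) (parry g) (Tmap g)) A = emeasure (parry g) B"
      using PTm Am unfolding B_def by (subst emeasure_distr) (auto simp: sets_parry)
    then show ?thesis using Pinv by simp
  qed
  have AmM: "A \<in> M.events" "B \<in> M.events" using Am Bm sets_mu by auto
  have AmP: "A \<in> P.events" "B \<in> P.events" using Am Bm sets_parry by auto
  have d1: "emeasure \<mu> (A - B) = emeasure \<mu> (B - A)"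
  proof -
    have "measure \<mu> (A - B) = measure \<mu> (B - A)"
      using AmM muAB M.finite_measure_Diff'[of A B] M.finite_measure_Diff'[of B A]
      by (simp add: M.emeasure_eq_measure Int_commute)
    then show ?thesis by (simp add: M.emeasure_eq_measure)
  qed
  have d2: "emeasure (parry g) (A - B) = emeasure (parry g) (B - A)"
  proof -
    have "measure (parry g) (A - B) = measure (parry g) (B - A)"
      using AmP paAB P.finite_measure_Diff'[of A B] P.finite_measure_Diff'[of B A]
      by (simp add: P.emeasure_eq_measure Int_commute)
    then show ?thesis by (simp add: P.emeasure_eq_measure)
  qed
  have ABm: "A - B \<in> sets unit_borel" "B - A \<in> sets unit_borel" using Am Bm by auto
  have n1: "emeasure lborel (A - B) = 0"
  proof (rule ccontr)
    assume "emeasure lborel (A - B) \<noteq> 0"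
    then have "emeasure (parry g) (A - B) < emeasure \<mu> (A - B)" using ABm by (intro strict) auto
    also have "\<dots> = emeasure \<mu> (B - A)" by (rule d1)
    also have "\<dots> \<le> emeasure (parry g) (B - A)" using ABm by (intro le) auto
    also have "\<dots> = emeasure (parry g) (A - B)" by (rule d2[symmetric])
    finally show False by simp
  qed
  have n2: "emeasure lborel (B - A) = 0"
  proof -
    have "emeasure (parry g) (A - B) = 0" using n1 parry_null_iff[OF g ABm(1)] by simp
    then have "emeasure (parry g) (B - A) = 0" using d2 by simp
    then show ?thesis using parry_null_iff[OF g ABm(2)] by simp
  qed
  have A': "A \<in> sets borel" "A \<subseteq> {0..<1}" using Am by (auto simp: sets_unit_borel)
  have erg: "measure lborel A = 0 \<or> measure lborel A = 1"
    using ergodic_lemma[OF g A'] n1 n2 unfolding B_def by simp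
  show ?thesis
  proof (cases "measure lborel A = 1")
    case True
    define C where "C = {0..<1} - A"
    have Cm: "C \<in> sets unit_borel" "C \<in> sets borel" "C \<subseteq> {0..<1}" using Am A' by (auto simp: C_def sets_unit_borel)
    have "measure lborel C = measure lborel {0..<1::real} - measure lborel A"
      unfolding C_def using A' lb_fin(1)[OF A']
      by (intro measure_Diff) (auto simp: fmeasurable_def)
    then have "measure lborel C = 0" using True by simp
    then have C0: "emeasure lborel C = 0" using lb_fin(1)[OF Cm(2,3)] by simp
    then have "emeasure \<mu> C = 0"
      using abs Cm emeasure_unit_lebesgue[OF Cm(1)] sets_unit_lebesgue
      by (intro absolutely_continuousD[OF abs]) auto
    moreover have "emeasure (parry g) C = 0" using parry_null_iff[OF g Cm(1)] C0 by simp
    moreover have "space \<mu> = A \<union> C" "space (parry g) = A \<union> C" "A \<inter> C = {}"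
      using space_mu A' by (auto simp: C_def)
    ultimately have "emeasure \<mu> A = 1" "emeasure (parry g) A = 1"
      using M.emeasure_space_1 P.emeasure_space_1 plus_emeasure[of A \<mu> C] plus_emeasure[of A "parry g" C]
        Am Cm sets_mu sets_parry by auto
    moreover have "emeasure (parry g) A < emeasure \<mu> A"
      using True lb_fin(1)[OF A'] Am by (intro strict) auto
    ultimately show ?thesis by simp
  next
    case False
    then have A0: "measure lborel A = 0" using erg by simp
    then have A0e: "emeasure lborel A = 0" using lb_fin(1)[OF A'] by simp
    have AUL: "A \<in> sets unit_lebesgue" using Am sets_unit_lebesgue by simp
    have "emeasure unit_lebesgue A = 0" using emeasure_unit_lebesgue[OF Am] A0e by simp
    then have muA: "emeasure \<mu> A = 0" by (rule absolutely_continuousD[OF abs AUL])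
    have AM: "A \<in> sets \<mu>" using Am sets_mu by simp
    have leS: "measure \<mu> S \<le> measure (parry g) S" if S: "S \<in> sets unit_borel" for S
    proof -
      have SS: "S \<in> sets \<mu>" using S sets_mu by simp
      have "emeasure \<mu> S = emeasure \<mu> (S - A)"
      proof -
        have "emeasure \<mu> (S \<inter> A) = 0" by (rule emeasure_eq_0[OF AM muA]) blast
        then have nS: "S \<inter> A \<in> null_sets \<mu>" using SS AM by (simp add: null_sets_def)
        have "S - (S \<inter> A) = S - A" by blast
        then show ?thesis using emeasure_Diff_null_set[OF nS SS] by simp
      qed
      also have "\<dots> \<le> emeasure (parry g) (S - A)"
      proof (rule le)
        show "S - A \<in> sets unit_borel" using S Am by (rule sets.Diff)
      qed blast
      also have "\<dots> \<le> emeasure (parry g) S"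
      proof (rule emeasure_mono)
        show "S \<in> sets (parry g)" using S sets_parry by simp
      qed blast
      finally have "ennreal (measure \<mu> S) \<le> ennreal (measure (parry g) S)"
        by (simp only: M.emeasure_eq_measure P.emeasure_eq_measure)
      then show ?thesis by (simp add: ennreal_le_iff)
    qed
    show ?thesis
    proof (rule measure_eqI)
      show "sets \<mu> = sets (parry g)" using sets_mu sets_parry by simp
      fix S assume "S \<in> sets \<mu>"
      then have S: "S \<in> sets unit_borel" using sets_mu by simp
      have Sc: "{0..<1} - S \<in> sets unit_borel" using S by (intro sets.Diff) (auto simp: sets_unit_borel)
      have "measure \<mu> S = 1 - measure \<mu> ({0..<1} - S)"
        using M.prob_compl[of S] S sets_mu space_mu by simp
      also have "\<dots> \<ge> 1 - measure (parry g) ({0..<1} - S)" using leS[OF Sc] by simp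
      also have "1 - measure (parry g) ({0..<1} - S) = measure (parry g) S"
        using P.prob_compl[of S] S sets_parry by simp
      finally have "measure (parry g) S \<le> measure \<mu> S" .
      then have "measure \<mu> S = measure (parry g) S" using leS[OF S] by simp
      then show "emeasure \<mu> S = emeasure (parry g) S"
        by (simp only: M.emeasure_eq_measure P.emeasure_eq_measure)
    qed
  qed
qed

lemma meas_ub: "sets M = sets unit_borel \<Longrightarrow> sets N = sets unit_borel \<Longrightarrow> measurable M N = measurable unit_borel unit_borel"
  by (rule measurable_cong_sets) auto

lemma nonsing:
  assumes g: "g > 1" and N: "N \<in> sets unit_borel" "emeasure lborel N = 0"
  shows "emeasure lborel (Tmap g -` N \<inter> {0..<1}) = 0"
proof -
  have N': "N \<in> sets borel" "N \<subseteq> {0..<1}" using N(1) by (auto simp: sets_unit_borel)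
  have e: "Tmap g -` N \<inter> {0..<1} = {x\<in>{0..<1}. Tmap g x \<in> N}" by auto
  have Nl: "N \<in> sets lborel" using N' by simp
  have "emeasure lborel (N \<inter> {0..<Tmap g 1}) = 0"
    by (rule emeasure_eq_0[OF Nl N(2)]) blast
  then show ?thesis unfolding e using KL[OF g N', of 1] N(2) by simp
qed

lemma ac_distr:
  assumes g: "g > 1" and s: "sets \<mu> = sets unit_borel" and ac: "absolutely_continuous unit_lebesgue \<mu>"
  shows "absolutely_continuous unit_lebesgue (distr \<mu> \<mu> (Tmap g))"
  unfolding absolutely_continuous_def
proof
  fix N assume "N \<in> null_sets unit_lebesgue"
  then have N: "N \<in> sets unit_borel" "emeasure unit_lebesgue N = 0"
    by (auto simp: null_sets_def sets_unit_lebesgue)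
  then have N0: "emeasure lborel N = 0" by (simp add: emeasure_unit_lebesgue)
  have sp: "space \<mu> = {0..<1}" using sets_eq_imp_space_eq[OF s] by simp
  have P: "Tmap g -` N \<inter> {0..<1} \<in> sets unit_borel" by (rule preimage_ub[OF N(1)])
  have "emeasure unit_lebesgue (Tmap g -` N \<inter> {0..<1}) = 0"
    using nonsing[OF g N(1) N0] emeasure_unit_lebesgue[OF P] by simp
  then have "emeasure \<mu> (Tmap g -` N \<inter> {0..<1}) = 0"
    using P sets_unit_lebesgue by (intro absolutely_continuousD[OF ac]) auto
  moreover have "Tmap g \<in> measurable \<mu> \<mu>" using Tmap_meas_ub meas_ub[OF s s] by simp
  ultimately have "emeasure (distr \<mu> \<mu> (Tmap g)) N = 0"
    using N(1) s sp by (subst emeasure_distr) auto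
  then show "N \<in> null_sets (distr \<mu> \<mu> (Tmap g))" using N(1) s by (simp add: null_sets_def)
qed

lemma THE_parry:
  assumes g: "g > 1" and f: "f = Tmap g"
  shows "(THE \<mu>. is_acip f \<mu>) = parry g"
  unfolding f
proof (rule the_equality)
  show "is_acip (Tmap g) (parry g)" by (rule parry_acip[OF g])
next
  fix \<mu> assume "is_acip (Tmap g) \<mu>" then show "\<mu> = parry g" by (rule acip_unique[OF g])
qed

lemma mu_comp1:
  assumes b: "b > 1" and n: "n \<ge> 1"
  shows "mu_comp (real n) b = parry (real n * b)"
proof -
  have "1 * b \<le> real n * b" using n b by (intro mult_right_mono) auto
  then have g: "real n * b > 1" using b by linarith
  have "Tmap (real n) \<circ> Tmap b = Tmap (real n * b)" by (auto simp: Tmap_comp)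
  then show ?thesis unfolding mu_comp_def by (intro THE_parry[OF g]) 
qed

lemma mu_comp2:
  assumes b: "b > 1" and n: "n \<ge> 2"
  shows "mu_comp b (real n) = distr (parry (real n * b)) (parry (real n * b)) (Tmap b)"
proof -
  have "1 * b \<le> real n * b" using n b by (intro mult_right_mono) auto
  then have g: "real n * b > 1" using b by linarith
  have n1: "real n > 1" using n by simp
  define P where "P = parry (real n * b)"
  define S where "S = Tmap b \<circ> Tmap (real n)"
  define \<nu> where "\<nu> = distr P P (Tmap b)"
  have PA: "is_acip (Tmap (real n * b)) P" unfolding P_def by (rule parry_acip[OF g])
  have sP: "sets P = sets unit_borel" using PA unfolding is_acip_def by simp
  interpret PP: prob_space P using PA unfolding is_acip_def by simp
  have Pinv: "distr P P (Tmap (real n * b)) = P" using PA unfolding is_acip_def by simp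
  have TU: "Tmap g \<in> measurable unit_borel unit_borel" for g by (rule Tmap_meas_ub)
  have SU: "S \<in> measurable unit_borel unit_borel" unfolding S_def by (rule measurable_comp[OF TU TU])
  have comp1: "Tmap (real n) \<circ> Tmap b = Tmap (real n * b)" by (auto simp: Tmap_comp)
  have s\<nu>: "sets \<nu> = sets unit_borel" unfolding \<nu>_def using sP by simp
  have acip: "is_acip S \<nu>" unfolding is_acip_def
  proof (intro conjI)
    show "sets \<nu> = sets unit_borel" by (rule s\<nu>)
    show "space \<nu> = {0..<1}" using sets_eq_imp_space_eq[OF s\<nu>] by simp
    show "prob_space \<nu>" unfolding \<nu>_def using TU meas_ub[OF sP sP] by (intro PP.prob_space_distr) auto
    show "absolutely_continuous unit_lebesgue \<nu>" unfolding \<nu>_def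
      using PA b sP unfolding is_acip_def by (intro ac_distr) auto
    show "S \<in> measurable \<nu> \<nu>" using SU meas_ub[OF s\<nu> s\<nu>] by simp
    have "distr \<nu> \<nu> S = distr P \<nu> (S \<circ> Tmap b)"
      unfolding \<nu>_def using SU TU meas_ub[OF sP sP] meas_ub[OF s\<nu> s\<nu>] s\<nu> sP
      by (subst distr_distr) (auto simp: \<nu>_def)
    also have "S \<circ> Tmap b = Tmap b \<circ> Tmap (real n * b)" unfolding S_def comp1[symmetric] by (simp add: comp_assoc)
    also have "distr P \<nu> (Tmap b \<circ> Tmap (real n * b)) = distr (distr P P (Tmap (real n * b))) \<nu> (Tmap b)"
      using TU meas_ub[OF sP sP] meas_ub[OF sP s\<nu>] by (subst distr_distr) auto
    also have "\<dots> = distr P \<nu> (Tmap b)" by (simp add: Pinv)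
    also have "\<dots> = \<nu>" unfolding \<nu>_def by (rule distr_cong) (auto simp: s\<nu>[unfolded \<nu>_def] sP)
    finally show "distr \<nu> \<nu> S = \<nu>" .
  qed
  have uniq: "\<mu> = \<nu>" if A: "is_acip S \<mu>" for \<mu>
  proof -
    have s: "sets \<mu> = sets unit_borel" and ac: "absolutely_continuous unit_lebesgue \<mu>"
      and pr: "prob_space \<mu>" and inv: "distr \<mu> \<mu> S = \<mu>" using A unfolding is_acip_def by auto
    interpret MM: prob_space \<mu> by (rule pr)
    define \<mu>' where "\<mu>' = distr \<mu> \<mu> (Tmap (real n))"
    have s': "sets \<mu>' = sets unit_borel" unfolding \<mu>'_def using s by simp
    have A': "is_acip (Tmap (real n * b)) \<mu>'" unfolding is_acip_def
    proof (intro conjI)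
      show "sets \<mu>' = sets unit_borel" by (rule s')
      show "space \<mu>' = {0..<1}" using sets_eq_imp_space_eq[OF s'] by simp
      show "prob_space \<mu>'" unfolding \<mu>'_def using TU meas_ub[OF s s] by (intro MM.prob_space_distr) auto
      show "absolutely_continuous unit_lebesgue \<mu>'" unfolding \<mu>'_def
        using n1 s ac by (intro ac_distr) auto
      show "Tmap (real n * b) \<in> measurable \<mu>' \<mu>'" using TU meas_ub[OF s' s'] by simp
      have "distr \<mu>' \<mu>' (Tmap (real n * b)) = distr \<mu> \<mu>' (Tmap (real n * b) \<circ> Tmap (real n))"
        unfolding \<mu>'_def using TU meas_ub[OF s s] meas_ub[OF s' s'] s' s
        by (subst distr_distr) (auto simp: \<mu>'_def)
      also have "Tmap (real n * b) \<circ> Tmap (real n) = Tmap (real n) \<circ> S"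
        unfolding S_def comp1[symmetric] by (simp add: comp_assoc)
      also have "distr \<mu> \<mu>' (Tmap (real n) \<circ> S) = distr (distr \<mu> \<mu> S) \<mu>' (Tmap (real n))"
        using TU SU meas_ub[OF s s] meas_ub[OF s s'] by (subst distr_distr) auto
      also have "\<dots> = \<mu>'" unfolding inv \<mu>'_def by (rule distr_cong) (auto simp: s'[unfolded \<mu>'_def] s)
      finally show "distr \<mu>' \<mu>' (Tmap (real n * b)) = \<mu>'" .
    qed
    have "\<mu>' = P" unfolding P_def by (rule acip_unique[OF g A'])
    have "\<mu> = distr \<mu> \<mu> S" using inv by simp
    also have "\<dots> = distr \<mu> \<mu> (Tmap b \<circ> Tmap (real n))" unfolding S_def ..
    also have "\<dots> = distr \<mu>' \<mu> (Tmap b)"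
      unfolding \<mu>'_def using TU meas_ub[OF s s] by (subst distr_distr) auto
    also have "\<dots> = distr P P (Tmap b)" using \<open>\<mu>' = P\<close> by (intro distr_cong) (auto simp: s sP)
    finally show ?thesis unfolding \<nu>_def .
  qed
  have "mu_comp b (real n) = (THE \<mu>. is_acip S \<mu>)" unfolding mu_comp_def S_def ..
  also have "\<dots> = \<nu>"
  proof (rule the_equality)
    show "is_acip S \<nu>" by (rule acip)
  next
    fix \<mu> assume "is_acip S \<mu>" then show "\<mu> = \<nu>" by (rule uniq)
  qed
  finally show ?thesis unfolding \<nu>_def P_def .
qed

lemma alt_emeasure:
  fixes M0 M1 :: "real measure"
  assumes s0: "sets M0 = sets unit_borel" and s1: "sets M1 = sets unit_borel" and A: "A \<in> sets unit_borel"
  shows "emeasure (measure_of ({0,1::nat} \<times> {0..<1}) (sets (count_space {0,1::nat} \<Otimes>\<^sub>M unit_borel))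
      (\<lambda>S. ennreal (1/2) * emeasure M0 {x. (0, x) \<in> S} + ennreal (1/2) * emeasure M1 {x. (1, x) \<in> S})) ({0} \<times> A)
    = ennreal (1/2) * emeasure M0 A"
proof -
  define F where "F = (\<lambda>S. ennreal (1/2) * emeasure M0 {x. (0::nat, x) \<in> S} + ennreal (1/2) * emeasure M1 {x. (1::nat, x) \<in> S})"
  define PM where "PM = count_space {0,1::nat} \<Otimes>\<^sub>M unit_borel"
  have sp: "space PM = {0,1::nat} \<times> {0..<1}" unfolding PM_def by (simp add: space_pair_measure)
  have sl: "{x. (i, x) \<in> S} \<in> sets unit_borel" if "S \<in> sets PM" for i S
  proof -
    have "Pair i -` S \<in> sets unit_borel" using that unfolding PM_def by (rule sets_Pair1)
    moreover have "Pair i -` S = {x. (i, x) \<in> S}" by auto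
    ultimately show ?thesis by simp
  qed
  have "emeasure (measure_of ({0,1::nat} \<times> {0..<1}) (sets PM) F) ({0} \<times> A) = F ({0} \<times> A)"
  proof (rule emeasure_measure_of_sigma)
    show "sigma_algebra ({0,1::nat} \<times> {0..<1}) (sets PM)" using sets.sigma_algebra_axioms[of PM] sp by simp
    show "positive (sets PM) F" unfolding positive_def F_def by simp
    show "{0} \<times> A \<in> sets PM" unfolding PM_def using A by (intro pair_measureI) auto
    show "countably_additive (sets PM) F"
      unfolding countably_additive_def
    proof (intro allI impI)
      fix B :: "nat \<Rightarrow> (nat \<times> real) set"
      assume B: "range B \<subseteq> sets PM" "disjoint_family B" "\<Union> (range B) \<in> sets PM"
      have sum_i: "(\<Sum>j. emeasure M {x. (i, x) \<in> B j}) = emeasure M {x. (i, x) \<in> \<Union> (range B)}"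
        if sM: "sets M = sets unit_borel" for M :: "real measure" and i
      proof -
        have "(\<Sum>j. emeasure M {x. (i, x) \<in> B j}) = emeasure M (\<Union>j. {x. (i, x) \<in> B j})"
        proof (rule suminf_emeasure)
          show "range (\<lambda>j. {x. (i, x) \<in> B j}) \<subseteq> sets M" using B(1) sl sM by auto
          show "disjoint_family (\<lambda>j. {x. (i, x) \<in> B j})" using B(2) by (auto simp: disjoint_family_on_def)
        qed
        moreover have "(\<Union>j. {x. (i, x) \<in> B j}) = {x. (i, x) \<in> \<Union> (range B)}" by auto
        ultimately show ?thesis by simp
      qed
      have "(\<Sum>j. F (B j)) = (\<Sum>j. ennreal (1/2) * emeasure M0 {x. (0, x) \<in> B j}) + (\<Sum>j. ennreal (1/2) * emeasure M1 {x. (1, x) \<in> B j})"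
        unfolding F_def by (subst suminf_add) auto
      also have "\<dots> = F (\<Union> (range B))"
        unfolding F_def ennreal_suminf_cmult sum_i[OF s0] sum_i[OF s1] ..
      finally show "(\<Sum>j. F (B j)) = F (\<Union> (range B))" .
    qed
  qed
  moreover have "F ({0} \<times> A) = ennreal (1/2) * emeasure M0 A" unfolding F_def by simp
  ultimately show ?thesis unfolding F_def PM_def by simp
qed

lemma Im: assumes "0 \<le> u" shows "measure lborel ({u..<v} \<inter> {0..<t}) = max 0 (min v t - u)"
proof (cases "u \<le> min v t")
  case True then show ?thesis using assms by (simp add: max_def)
next
  case False then show ?thesis using assms by (simp add: max_def min_def)
qed

lemma tail_sums:
  fixes r :: real assumes r: "0 < r" "r < 1"
  shows "(\<lambda>k. if k \<le> K then 0 else r^k) sums (r^(K+1) / (1 - r))"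
proof -
  have "(\<lambda>i. r^(K+1) * r^i) sums (r^(K+1) * (1 / (1 - r)))"
    using r by (intro sums_mult geometric_sums) auto
  then have "(\<lambda>i. (\<lambda>k. if k \<le> K then 0 else r^k) (i + (K+1))) sums (r^(K+1) / (1 - r))"
    by (simp add: power_add mult_ac)
  then show ?thesis by (subst (asm) sums_zero_iff_shift) auto
qed

lemma pw_diff_lower:
  assumes a: "a > 1" and e: "0 < e" "e \<le> tk a 1" "tk a 1 + e \<le> 1"
  shows "e / a \<le> pw a {tk a 1 - e..<tk a 1} - pw a {tk a 1..<tk a 1 + e}"
proof -
  define p where "p = tk a 1"
  define d where "d k = (measure lborel ({p-e..<p} \<inter> {0..<tk a k}) - measure lborel ({p..<p+e} \<inter> {0..<tk a k})) / a^k" for k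
  have s1: "summable (\<lambda>k. measure lborel ({p-e..<p} \<inter> {0..<tk a k}) / a^k)"
    using e by (intro pw_summable[OF a]) (auto simp: p_def)
  have s2: "summable (\<lambda>k. measure lborel ({p..<p+e} \<inter> {0..<tk a k}) / a^k)"
    using e by (intro pw_summable[OF a]) (auto simp: p_def)
  have D: "pw a {p-e..<p} - pw a {p..<p+e} = suminf d"
    unfolding pw_def d_def using s1 s2 by (subst suminf_diff) (auto simp: diff_divide_distrib)
  have dnn: "0 \<le> d k" for k
  proof -
    have "max 0 (min (p + e) (tk a k) - p) \<le> max 0 (min p (tk a k) - (p - e))" using e by (auto simp: max_def min_def)
    then show ?thesis unfolding d_def using e a by (subst Im, simp add: p_def, subst Im, simp add: p_def) auto
  qed
  have sd: "summable d" unfolding d_def using summable_diff[OF s1 s2] by (simp add: diff_divide_distrib)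
  have "d 1 \<le> suminf d" using sum_le_suminf[OF sd, of "{1}"] dnn by simp
  moreover have "d 1 = e / a" unfolding d_def using e by (simp add: Im p_def)
  ultimately show ?thesis using D by (simp add: p_def)
qed

lemma pw_diff_upper:
  assumes b: "b > 1" and e: "0 < e" "e \<le> p" "p + e \<le> 1"
  shows "pw b {p - e..<p} - pw b {p..<p + e} \<le> e / (b - 1)"
proof -
  define d where "d k = (measure lborel ({p-e..<p} \<inter> {0..<tk b k}) - measure lborel ({p..<p+e} \<inter> {0..<tk b k})) / b^k" for k
  have s1: "summable (\<lambda>k. measure lborel ({p-e..<p} \<inter> {0..<tk b k}) / b^k)"
    using e by (intro pw_summable[OF b]) auto
  have s2: "summable (\<lambda>k. measure lborel ({p..<p+e} \<inter> {0..<tk b k}) / b^k)"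
    using e by (intro pw_summable[OF b]) auto
  have D: "pw b {p-e..<p} - pw b {p..<p+e} = suminf d"
    unfolding pw_def d_def using s1 s2 by (subst suminf_diff) (auto simp: diff_divide_distrib)
  define h where "h k = e * (if k \<le> 0 then 0 else (1/b)^k)" for k
  have hs: "h sums (e * ((1/b)^(0+1) / (1 - 1/b)))" unfolding h_def
    using b by (intro sums_mult tail_sums) auto
  have hv: "e * ((1/b)^(0+1) / (1 - 1/b)) = e / (b - 1)" using b by (simp add: field_simps)
  have dle: "d k \<le> h k" for k
  proof (cases "k = 0")
    case True
    have e0: "0 \<le> e" "p - e \<le> p" "p \<le> p + e" using e by auto
    have "measure lborel ({p-e..<p} \<inter> {0..<tk b 0}) = e" using Im[of "p-e" p "tk b 0"] e by simp
    moreover have "measure lborel ({p..<p+e} \<inter> {0..<tk b 0}) = e" using Im[of p "p+e" "tk b 0"] e by simp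
    ultimately have "d 0 = 0" unfolding d_def by simp
    then show ?thesis using True by (simp add: h_def)
  next
    case False
    have "max 0 (min p (tk b k) - (p - e)) - max 0 (min (p + e) (tk b k) - p) \<le> e"
      using e by (auto simp: max_def min_def)
    then have "d k \<le> e / b^k" unfolding d_def using e b
      by (subst Im, simp, subst Im, simp) (auto intro!: divide_right_mono)
    then show ?thesis using False by (simp add: h_def power_divide)
  qed
  have sd: "summable d" unfolding d_def using summable_diff[OF s1 s2] by (simp add: diff_divide_distrib)
  have "suminf d \<le> suminf h" using sd hs dle by (intro suminf_le) (auto simp: sums_iff)
  moreover have "suminf h = e / (b - 1)" using sums_unique[OF hs] hv by (simp only:)
  ultimately show ?thesis using D by (simp only:)
qed

lemma pw_near1_upper:
  assumes a: "a > 1" and dl: "\<delta> > 0"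
  shows "\<exists>\<eta>>0. \<eta> \<le> 1 \<and> pw a {1 - \<eta>..<1} \<le> \<eta> * (1 + \<delta>)"
proof -
  define r where "r = 1 / a"
  have r: "0 < r" "r < 1" using a by (auto simp: r_def)
  obtain K where K: "r^K < \<delta> * (1 - r)" using real_arch_pow_inv[of "\<delta> * (1 - r)" r] r dl by auto
  define \<eta> where "\<eta> = Min (insert 1 ((\<lambda>k. 1 - tk a k) ` {1..K}))"
  have fin: "finite (insert 1 ((\<lambda>k. 1 - tk a k) ` {1..K}))" by simp
  have lt: "tk a k < 1" if "1 \<le> k" for k
  proof -
    have "k = Suc (k - 1)" using that by simp
    then obtain j where "k = Suc j" by blast
    then show ?thesis using tk_Suc_lt by simp
  qed
  have eta_pos: "\<eta> > 0" unfolding \<eta>_def using fin lt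
    by (subst Min_gr_iff) auto
  have eta1: "\<eta> \<le> 1" unfolding \<eta>_def using fin by (intro Min_le) auto
  have etak: "\<eta> \<le> 1 - tk a k" if "1 \<le> k" "k \<le> K" for k
    unfolding \<eta>_def using fin that by (intro Min_le) auto
  define f where "f k = measure lborel ({1 - \<eta>..<1} \<inter> {0..<tk a k}) / a^k" for k
  define h where "h k = (if k = 0 then \<eta> else 0) + \<eta> * (if k \<le> K then 0 else r^k)" for k
  have hs: "h sums (\<eta> + \<eta> * (r^(K+1) / (1 - r)))" unfolding h_def
    by (intro sums_add sums_mult tail_sums r) (simp add: sums_single[of 0 "\<lambda>_. \<eta>", simplified])
  have fle: "f k \<le> h k" for k
  proof -
    consider "k = 0" | "1 \<le> k" "k \<le> K" | "K < k" by linarith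
    then show ?thesis
    proof cases
      case 1 then show ?thesis unfolding f_def h_def using eta_pos eta1 by (simp add: Im)
    next
      case 2
      then have "tk a k \<le> 1 - \<eta>" using etak by force
      then show ?thesis unfolding f_def h_def using 2 eta_pos eta1 by (subst Im) (auto simp: max_def min_def)
    next
      case 3
      have "max 0 (min 1 (tk a k) - (1 - \<eta>)) \<le> \<eta>" using eta_pos by (auto simp: max_def min_def)
      then have "f k \<le> \<eta> / a^k" unfolding f_def using eta1 a
        by (subst Im) (auto intro!: divide_right_mono)
      then show ?thesis using 3 by (simp add: h_def r_def power_divide)
    qed
  qed
  have sf: "summable f" unfolding f_def using eta1 eta_pos by (intro pw_summable[OF a]) auto
  have "pw a {1 - \<eta>..<1} = suminf f" unfolding pw_def f_def ..
  also have "\<dots> \<le> suminf h" using sf hs fle by (intro suminf_le) (auto simp: sums_iff)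
  also have "\<dots> = \<eta> + \<eta> * (r^(K+1) / (1 - r))" using hs by (simp add: sums_iff)
  also have "\<dots> \<le> \<eta> * (1 + \<delta>)"
  proof -
    have "r^(K+1) \<le> r^K" using r by (simp add: power_decreasing)
    then have A: "r^(K+1) \<le> \<delta> * (1 - r)" using K by linarith
    have "r^(K+1) / (1 - r) \<le> \<delta>" using A r by (subst pos_divide_le_eq) auto
    then have "\<eta> * (r^(K+1) / (1 - r)) \<le> \<eta> * \<delta>" using eta_pos by (intro mult_left_mono) auto
    then show ?thesis by (simp only: distrib_left mult_1_right)
  qed
  finally show ?thesis using eta_pos eta1 by blast
qed

lemma distinguish:
  assumes a: "a > 1" and b: "b > 1" and ab: "b - 1 > a" and p0: "tk a 1 > 0"
    and eq: "\<And>A. A \<in> sets unit_borel \<Longrightarrow> pw a A / Zc a = pw b A / Zc b"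
  shows False
proof -
  define p where "p = tk a 1"
  have p1: "p < 1" unfolding p_def using tk_Suc_lt[of a 0] by simp
  define e where "e = min p (1 - p)"
  have e: "0 < e" "e \<le> p" "p + e \<le> 1" using p0 p1 by (auto simp: e_def p_def)
  have Za: "Zc a \<ge> 1" and Zb: "Zc b \<ge> 1" using Zc_ge1 a b by auto
  have I1: "{p - e..<p} \<in> sets unit_borel" and I2: "{p..<p + e} \<in> sets unit_borel"
    using e by (auto simp: sets_unit_borel)
  have L: "e / a \<le> pw a {p - e..<p} - pw a {p..<p + e}"
    using pw_diff_lower[OF a e[unfolded p_def]] by (simp add: p_def)
  have U: "pw b {p - e..<p} - pw b {p..<p + e} \<le> e / (b - 1)"
    by (rule pw_diff_upper[OF b e])
  have Q: "(pw a {p - e..<p} - pw a {p..<p + e}) / Zc a = (pw b {p - e..<p} - pw b {p..<p + e}) / Zc b"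
    using eq[OF I1] eq[OF I2] by (simp add: diff_divide_distrib)
  have "e / a / Zc a \<le> (pw a {p - e..<p} - pw a {p..<p + e}) / Zc a"
    using L Za by (intro divide_right_mono) auto
  also have "\<dots> \<le> e / (b - 1) / Zc b" unfolding Q using U Zb by (intro divide_right_mono) auto
  finally have C1: "e / a / Zc a \<le> e / (b - 1) / Zc b" .
  then have "e * ((b - 1) * Zc b) \<le> e * (a * Zc a)" using e a b Za Zb by (simp add: field_simps)
  then have C1': "(b - 1) * Zc b \<le> a * Zc a" using e(1) by (simp add: mult_le_cancel_left_pos)
  define \<delta> where "\<delta> = (b - 1 - a) / (2 * a)"
  have dl: "\<delta> > 0" using ab a by (simp add: \<delta>_def)
  obtain \<eta> where et: "\<eta> > 0" "\<eta> \<le> 1" "pw a {1 - \<eta>..<1} \<le> \<eta> * (1 + \<delta>)"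
    using pw_near1_upper[OF a dl] by blast
  have J: "{1 - \<eta>..<1} \<in> sets unit_borel" "{1 - \<eta>..<1} \<in> sets borel" "{1 - \<eta>..<1} \<subseteq> {0..<1::real}"
    using et by (auto simp: sets_unit_borel)
  have "\<eta> \<le> pw b {1 - \<eta>..<1}" using pw_nonneg_terms(1)[OF b J(2,3)] et by simp
  then have "\<eta> / Zc b \<le> pw b {1 - \<eta>..<1} / Zc b" using Zb by (intro divide_right_mono) auto
  also have "\<dots> = pw a {1 - \<eta>..<1} / Zc a" using eq[OF J(1)] by simp
  also have "\<dots> \<le> \<eta> * (1 + \<delta>) / Zc a" using et Za by (intro divide_right_mono) auto
  finally have C2: "\<eta> / Zc b \<le> \<eta> * (1 + \<delta>) / Zc a" .
  then have "\<eta> * Zc a \<le> \<eta> * ((1 + \<delta>) * Zc b)" using et Za Zb by (simp add: field_simps)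
  then have C2': "Zc a \<le> (1 + \<delta>) * Zc b" using et(1) by (simp add: mult_le_cancel_left_pos)
  have "a * Zc a \<le> a * ((1 + \<delta>) * Zc b)" using C2' a by (intro mult_left_mono) auto
  then have "(b - 1) * Zc b \<le> a * ((1 + \<delta>) * Zc b)" using C1' by linarith
  then have "b - 1 \<le> a * (1 + \<delta>)" using Zb by (simp add: mult.assoc[symmetric])
  moreover have "a * (1 + \<delta>) = a + (b - 1 - a) / 2" using a by (simp add: \<delta>_def field_simps)
  moreover have "(b - 1 - a) / 2 < b - 1 - a" using ab by simp
  ultimately show False by linarith
qed

lemma core:
  fixes \<beta> :: real and n m :: nat
  assumes b1: "\<beta> > 1" and irr: "\<beta> \<notin> \<rat>" and n: "n \<ge> 2" and nm: "n < m"
    and eq: "mu_alt \<beta> n = mu_alt \<beta> m"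
  shows False
proof -
  define a where "a = real n * \<beta>"
  define b where "b = real m * \<beta>"
  have "1 * \<beta> \<le> real n * \<beta>" using n b1 by (intro mult_right_mono) auto
  then have a1: "a > 1" unfolding a_def using b1 by linarith
  have "1 * \<beta> \<le> real m * \<beta>" using n nm b1 by (intro mult_right_mono) auto
  then have bb1: "b > 1" unfolding b_def using b1 by linarith
  have "b - a = (real m - real n) * \<beta>" by (simp add: a_def b_def algebra_simps)
  moreover have "1 * \<beta> \<le> (real m - real n) * \<beta>" using nm b1 by (intro mult_right_mono) auto
  ultimately have ab: "b - 1 > a" using b1 by linarith
  have m2: "m \<ge> 2" using n nm by simp
  have sets2: "sets (mu_comp \<beta> (real k)) = sets unit_borel" if "k \<ge> 2" for k
    using mu_comp2[OF b1 that] by (simp add: sets_parry)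
  have sets1: "sets (mu_comp (real k) \<beta>) = sets unit_borel" if "k \<ge> 2" for k
    using mu_comp1[OF b1, of k] that by (simp add: sets_parry)
  have alt: "emeasure (mu_alt \<beta> k) ({0} \<times> A) = ennreal (1/2) * emeasure (parry (real k * \<beta>)) A"
    if "k \<ge> 2" "A \<in> sets unit_borel" for k A
  proof -
    have "emeasure (mu_alt \<beta> k) ({0} \<times> A) = ennreal (1/2) * emeasure (mu_comp (real k) \<beta>) A"
      unfolding mu_alt_def by (rule alt_emeasure[OF sets1[OF that(1)] sets2[OF that(1)] that(2)])
    then show ?thesis using mu_comp1[OF b1, of k] that by simp
  qed
  have peq: "pw a A / Zc a = pw b A / Zc b" if A: "A \<in> sets unit_borel" for A
  proof -
    have "ennreal (1/2) * emeasure (parry a) A = ennreal (1/2) * emeasure (parry b) A"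
      using alt[OF n A] alt[OF m2 A] eq by (simp add: a_def b_def)
    then have "emeasure (parry a) A = emeasure (parry b) A" by (simp add: ennreal_mult_cancel_left)
    then have "ennreal (pw a A / Zc a) = ennreal (pw b A / Zc b)"
      using parry_emeasure[OF a1 A] parry_emeasure[OF bb1 A] by simp
    moreover have "0 \<le> pw a A / Zc a" "0 \<le> pw b A / Zc b"
      using A pw_nonneg_terms(2)[OF a1] pw_nonneg_terms(2)[OF bb1] Zc_ge1[OF a1] Zc_ge1[OF bb1]
      by (auto simp: sets_unit_borel)
    ultimately show ?thesis by simp
  qed
  have p0: "tk a 1 > 0"
  proof -
    have t: "tk a 1 = frac a" by (simp add: tk_Suc[of a 0, simplified] Tmap_frac)
    have "frac a \<noteq> 0"
    proof
      assume "frac a = 0"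
      then have "a \<in> \<int>" by (simp add: frac_eq_0_iff)
      then have "a \<in> \<rat>" using Ints_subset_Rats by blast
      then have "a / real n \<in> \<rat>" using Rats_divide Rats_of_nat by blast
      moreover have "a / real n = \<beta>" using n by (simp add: a_def)
      ultimately show False using irr by simp
    qed
    then show ?thesis using t frac_ge_0[of a] by linarith
  qed
  show False by (rule distinguish[OF a1 bb1 ab p0 peq])
qed

theorem mainTheorem7:
  fixes \<beta> :: real and n m :: nat
  assumes "\<beta> > 1" and "\<beta> \<notin> \<rat>"
    and "n \<ge> 2" and "m \<ge> 2" and "n \<noteq> m"
  shows "mu_alt \<beta> n \<noteq> mu_alt \<beta> m"
proof
  assume eq: "mu_alt \<beta> n = mu_alt \<beta> m"
  show False
  proof (cases "n < m")
    case True show False by (rule core[OF assms(1,2,3) True eq])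
  next
    case False then have "m < n" using assms(5) by simp
    then show False using core[OF assms(1,2,4) _ eq[symmetric]] by simp
  qed
qed

end
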